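(* Let $\mathcal{F}$ be a complete pointed virtually inscribable fan in $\mathbb{R}^2$ with $n\ge3$ regions and profile $\beta=(\beta_0,\dots,\beta_{n-1})$ (indices modulo $n$). If $n$ is odd, then $\mathcal{F}$ is inscribable if and only if $\beta_{j}-\beta_{j+1}+\beta_{j+2}-\cdots-\beta_{j+n-2}+\beta_{j+n-1}>0$ for all $0\le j<n$. If $n=2m$ is even, then $\mathcal{F}$ is inscribable if and only if $\sum_{i=1}^{h}\beta_{2i+j}+\sum_{i=h+1}^{m-1}\beta_{2i+1+j}<\pi$ for all $0\le h<m$ and $0\le j<n$.
   Context: The regions $R_0,\dots,R_{n-1}$ of $\mathcal{F}$ are ordered counterclockwise and $\beta_i\in(0,\pi)$ is the angle of $R_i$; $\beta$ determines $\mathcal{F}$ up to rotation. A fan is inscribable if it is the normal fan of a polygon whose vertices lie on a circle. The fan is virtually inscribable if there is a nonzero $v\in\mathbb{R}^2$ fixed by the composition of the reflections in the $n$ rays of $\mathcal{F}$ taken in cyclic order (equivalently: for $n$ odd always; for $n$ even iff the alternate angles $\beta_0+\beta_2+\cdots+\beta_{n-2}$ sum to $\pi$). *)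

theory Defs
  imports "HOL-Analysis.Analysis"
begin

text \<open>The plane R^2 is modelled by the type complex (a euclidean_space with the
standard inner product).  A profile is beta :: nat => real, used at indices < n.\<close>

definition ray_angle :: "real \<Rightarrow> (nat \<Rightarrow> real) \<Rightarrow> nat \<Rightarrow> real" where
  "ray_angle \<alpha> \<beta> i = \<alpha> + (\<Sum>k<i. \<beta> k)"

definition fan_region :: "real \<Rightarrow> (nat \<Rightarrow> real) \<Rightarrow> nat \<Rightarrow> complex set" where
  "fan_region \<alpha> \<beta> i =
     {complex_of_real r * cis t | r t. 0 \<le> r \<and> ray_angle \<alpha> \<beta> i \<le> t \<and> t \<le> ray_angle \<alpha> \<beta> i + \<beta> i}"

text \<open>The fan (as its set of regions = maximal cones) with n regions.\<close>
definition fan_regions :: "nat \<Rightarrow> real \<Rightarrow> (nat \<Rightarrow> real) \<Rightarrow> complex set set" where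
  "fan_regions n \<alpha> \<beta> = fan_region \<alpha> \<beta> ` {..<n}"

definition normal_cone :: "complex set \<Rightarrow> complex \<Rightarrow> complex set" where
  "normal_cone P v = {c. \<forall>w\<in>P. inner c w \<le> inner c v}"

definition normal_fan_regions :: "complex set \<Rightarrow> complex set set" where
  "normal_fan_regions P = {normal_cone P v | v. v extreme_point_of P}"

definition inscribable :: "nat \<Rightarrow> real \<Rightarrow> (nat \<Rightarrow> real) \<Rightarrow> bool" where
  "inscribable n \<alpha> \<beta> \<longleftrightarrow>
     (\<exists>P. polytope P \<and> (\<exists>c r. \<forall>v. v extreme_point_of P \<longrightarrow> dist v c = r)
          \<and> normal_fan_regions P = fan_regions n \<alpha> \<beta>)"

definition reflect_line :: "real \<Rightarrow> complex \<Rightarrow> complex" where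
  "reflect_line t z = cis (2 * t) * cnj z"

fun refl_comp :: "real \<Rightarrow> (nat \<Rightarrow> real) \<Rightarrow> nat \<Rightarrow> complex \<Rightarrow> complex" where
  "refl_comp \<alpha> \<beta> 0 z = z"
| "refl_comp \<alpha> \<beta> (Suc k) z = reflect_line (ray_angle \<alpha> \<beta> k) (refl_comp \<alpha> \<beta> k z)"

definition virtually_inscribable :: "nat \<Rightarrow> real \<Rightarrow> (nat \<Rightarrow> real) \<Rightarrow> bool" where
  "virtually_inscribable n \<alpha> \<beta> \<longleftrightarrow> (\<exists>v. v \<noteq> 0 \<and> refl_comp \<alpha> \<beta> n v = v)"

end

theory Submission
  imports Defs
begin

lemma cis_eq_imp: assumes "cis a = cis b" shows "\<exists>q::int. a = b + 2 * pi * q"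
proof -
  have "cis (a - b) = 1" using assms
    by (metis cis_divide divide_self_if cis_neq_zero)
  hence "exp (\<i> * complex_of_real (a - b)) = 1" by (simp add: cis_conv_exp)
  then obtain q :: int where "a - b = real_of_int (2*q) * pi" by (auto simp: exp_eq_1)
  thus ?thesis by (intro exI[of _ q]) (simp add: algebra_simps)
qed

lemma cis_shift_int: "cis (a + 2 * pi * of_int q) = cis a"
proof -
  have "cis (2 * pi * of_int q) = 1" by (rule cis_multiple_2pi) simp
  thus ?thesis by (metis cis_mult mult_1_right)
qed

lemma inner_cis: "inner (cis a) (cis b) = cos (a - b)"
  by (simp add: inner_complex_def cos_diff)

lemma inner_rcis: "inner (complex_of_real r * cis a) (cis b) = r * cos (a - b)"
  by (simp add: inner_complex_def cos_diff algebra_simps)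


lemma nearest:
  fixes f :: "nat \<Rightarrow> real"
  assumes sm: "strict_mono f" and j: "1 \<le> j" and lo: "f (j-1) + f j \<le> 2 * s"
    and hi: "2 * s \<le> f j + f (Suc j)"
  shows "\<bar>s - f j\<bar> \<le> \<bar>s - f l\<bar>"
    and "\<bar>s - f l\<bar> = \<bar>s - f j\<bar> \<Longrightarrow> l = j \<or> (l = Suc j \<and> 2 * s = f j + f (Suc j)) \<or> (l = j - 1 \<and> 2 * s = f (j-1) + f j)"
proof -
  have a1: "f (j-1) < f j" using sm j by (simp add: strict_mono_less)
  have a2: "f j < f (Suc j)" using sm by (simp add: strict_mono_less)
  have "\<bar>s - f j\<bar> \<le> \<bar>s - f l\<bar> \<and> (\<bar>s - f l\<bar> = \<bar>s - f j\<bar> \<longrightarrow> l = j \<or> (l = Suc j \<and> 2 * s = f j + f (Suc j)) \<or> (l = j - 1 \<and> 2 * s = f (j-1) + f j))"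
  proof (cases "l = j")
    case True then show ?thesis by simp
  next
    case False
    hence "Suc j \<le> l \<or> l \<le> j - 1" by auto
    thus ?thesis
    proof
      assume l: "Suc j \<le> l"
      have b: "f (Suc j) \<le> f l" using sm l by (simp add: strict_mono_less_eq)
      have c: "l \<noteq> Suc j \<Longrightarrow> f (Suc j) < f l" using sm l by (simp add: strict_mono_less)
      have sl: "\<bar>s - f l\<bar> = f l - s" using a2 b hi by simp
      have d: "\<bar>s - f j\<bar> \<le> f (Suc j) - s" using a2 hi by (simp add: abs_le_iff)
      have e: "\<bar>s - f l\<bar> = \<bar>s - f j\<bar> \<Longrightarrow> l = Suc j \<and> 2 * s = f j + f (Suc j)"
      proof -
        assume eq: "\<bar>s - f l\<bar> = \<bar>s - f j\<bar>"
        have "l = Suc j" using c sl d eq by force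
        moreover have "2 * s = f j + f (Suc j)"
        proof (cases "f j \<le> s")
          case True then show ?thesis using eq sl \<open>l = Suc j\<close> by simp
        next
          case False then show ?thesis using eq sl \<open>l = Suc j\<close> a2 by simp
        qed
        ultimately show ?thesis by simp
      qed
      show ?thesis using sl d b e by simp
    next
      assume l: "l \<le> j - 1"
      have b: "f l \<le> f (j - 1)" using sm l by (simp add: strict_mono_less_eq)
      have c: "l \<noteq> j - 1 \<Longrightarrow> f l < f (j - 1)" using sm l by (simp add: strict_mono_less)
      have sl: "\<bar>s - f l\<bar> = s - f l" using a1 b lo by simp
      have d: "\<bar>s - f j\<bar> \<le> s - f (j - 1)" using a1 lo by (simp add: abs_le_iff)
      have e: "\<bar>s - f l\<bar> = \<bar>s - f j\<bar> \<Longrightarrow> l = j - 1 \<and> 2 * s = f (j - 1) + f j"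
      proof -
        assume eq: "\<bar>s - f l\<bar> = \<bar>s - f j\<bar>"
        have "l = j - 1" using c sl d eq by force
        moreover have "2 * s = f (j - 1) + f j"
        proof (cases "s \<le> f j")
          case True then show ?thesis using eq sl \<open>l = j - 1\<close> by simp
        next
          case False then show ?thesis using eq sl \<open>l = j - 1\<close> a1 by simp
        qed
        ultimately show ?thesis by simp
      qed
      show ?thesis using sl d b e by simp
    qed
  qed
  thus "\<bar>s - f j\<bar> \<le> \<bar>s - f l\<bar>"
    and "\<bar>s - f l\<bar> = \<bar>s - f j\<bar> \<Longrightarrow> l = j \<or> (l = Suc j \<and> 2 * s = f j + f (Suc j)) \<or> (l = j - 1 \<and> 2 * s = f (j-1) + f j)"
    by auto
qed

lemma cos_abs_le:
  assumes "\<bar>x\<bar> \<le> \<bar>y\<bar>" "\<bar>y\<bar> \<le> pi"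
  shows "cos y \<le> cos x"
proof -
  have "cos \<bar>y\<bar> \<le> cos \<bar>x\<bar>" using assms by (intro cos_monotone_0_pi_le) simp_all
  thus ?thesis by (simp only: cos_abs_real)
qed

lemma cos_abs_eq:
  assumes "cos x = cos y" "\<bar>x\<bar> \<le> pi" "\<bar>y\<bar> \<le> pi"
  shows "\<bar>x\<bar> = \<bar>y\<bar>"
proof -
  have "cos \<bar>x\<bar> = cos \<bar>y\<bar>" using assms(1) by (simp only: cos_abs_real)
  thus ?thesis using cos_inj_pi[of "\<bar>x\<bar>" "\<bar>y\<bar>"] assms(2,3) by simp
qed

lemma unit_inner_eq:
  fixes w b :: complex
  assumes "norm w = 1" "norm b \<le> 1" "inner w b = 1"
  shows "b = w"
proof -
  have "inner (b - w) (b - w) = inner b b - 2 * inner w b + inner w w"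
    by (simp add: inner_diff_left inner_diff_right inner_commute)
  also have "\<dots> = (norm b)^2 - 1"
    using assms power2_norm_eq_inner[of w] power2_norm_eq_inner[of b] by simp
  also have "\<dots> \<le> 0" using assms(2) by (simp add: abs_square_le_1)
  finally have "inner (b - w) (b - w) \<le> 0" .
  hence "inner (b - w) (b - w) = 0" using inner_ge_zero[of "b - w"] by linarith
  hence "b - w = 0" by simp
  thus ?thesis by simp
qed


primrec altc :: "(nat \<Rightarrow> real) \<Rightarrow> nat \<Rightarrow> real" where
  "altc b 0 = 0"
| "altc b (Suc k) = 2 * b k - altc b k"

lemma altc_even: "altc b (2 * p) = 2 * (\<Sum>i<p. b (2 * i + 1) - b (2 * i))"
proof (induction p)
  case 0 then show ?case by simp
next
  case (Suc p)
  have "altc b (2 * Suc p) = 2 * b (2 * p + 1) - (2 * b (2 * p) - altc b (2 * p))"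
    by (simp add: numeral_2_eq_2)
  then show ?case using Suc by (simp add: algebra_simps)
qed

lemma refl_comp_even: "refl_comp \<alpha> \<beta> (2 * p) z = cis (2 * (\<Sum>i<p. \<beta> (2 * i))) * z"
proof (induction p)
  case 0 then show ?case by simp
next
  case (Suc p)
  have ra: "ray_angle \<alpha> \<beta> (Suc (2 * p)) = ray_angle \<alpha> \<beta> (2 * p) + \<beta> (2 * p)"
    unfolding ray_angle_def by simp
  have "refl_comp \<alpha> \<beta> (2 * Suc p) z = reflect_line (ray_angle \<alpha> \<beta> (Suc (2 * p)))
          (reflect_line (ray_angle \<alpha> \<beta> (2 * p)) (refl_comp \<alpha> \<beta> (2 * p) z))"
    by (simp add: numeral_2_eq_2)
  also have "\<dots> = cis (2 * ray_angle \<alpha> \<beta> (Suc (2 * p))) * cis (- (2 * ray_angle \<alpha> \<beta> (2 * p)))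
                  * refl_comp \<alpha> \<beta> (2 * p) z"
    unfolding reflect_line_def by (simp add: cis_cnj)
  also have "cis (2 * ray_angle \<alpha> \<beta> (Suc (2 * p))) * cis (- (2 * ray_angle \<alpha> \<beta> (2 * p))) = cis (2 * \<beta> (2 * p))"
    unfolding ra cis_mult by (simp add: algebra_simps)
  finally show ?case using Suc by (simp add: cis_mult[symmetric] algebra_simps)
qed


lemma half_lt: "(X::real) + (p + q) / 2 = Y \<Longrightarrow> 0 < p \<Longrightarrow> 0 < q \<Longrightarrow> X < Y"
  by (auto simp: field_simps)
lemma half_gt: "(X::real) + (p + q) / 2 = Y \<Longrightarrow> X < Y \<Longrightarrow> 0 < p + q"
  by (auto simp: field_simps)

locale fanctx =
  fixes n :: nat and \<alpha> :: real and \<beta> :: "nat \<Rightarrow> real"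
  assumes n3: "n \<ge> 3"
    and bpos: "\<forall>i<n. 0 < \<beta> i \<and> \<beta> i < pi"
    and bsum: "(\<Sum>i<n. \<beta> i) = 2 * pi"
begin

definition B :: "nat \<Rightarrow> real" where "B l = \<beta> (l mod n)"
definition T :: "nat \<Rightarrow> real" where "T l = \<alpha> + (\<Sum>k<l. B k)"

lemma npos: "n > 0" using n3 by simp

lemma B_pos: "0 < B l" "B l < pi"
  using bpos npos by (auto simp: B_def)

lemma B_mod[simp]: "B (l mod n) = B l" by (simp add: B_def)
lemma B_add_n[simp]: "B (l + n) = B l" by (simp add: B_def)

lemma T_ray: "i \<le> n \<Longrightarrow> T i = ray_angle \<alpha> \<beta> i"
  unfolding T_def ray_angle_def by (auto intro!: sum.cong simp: B_def)

lemma T_Suc: "T (Suc l) = T l + B l" by (simp add: T_def)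

lemma T_0: "T 0 = \<alpha>" by (simp add: T_def)

lemma T_n: "T n = \<alpha> + 2 * pi"
  using T_ray[of n] bsum by (simp add: ray_angle_def)

lemma T_add_n: "T (l + n) = T l + 2 * pi"
proof (induction l)
  case 0 then show ?case using T_n T_0 by simp
next
  case (Suc l)
  have "T (Suc l + n) = T (l + n) + B (l + n)" using T_Suc[of "l+n"] by simp
  then show ?case using Suc T_Suc[of l] by simp
qed

lemma T_mult: "T (r + n * q) = T r + 2 * pi * q"
proof (induction q)
  case 0 then show ?case by simp
next
  case (Suc q)
  have "T (r + n * Suc q) = T (r + n * q + n)" by (simp add: algebra_simps)
  then show ?case using Suc T_add_n[of "r + n*q"] by (simp add: algebra_simps)
qed

lemma T_modn: "T l = T (l mod n) + 2 * pi * (l div n)"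
  using T_mult[of "l mod n" "l div n"] by simp

lemma T_mono_less: "l < l' \<Longrightarrow> T l < T l'"
proof -
  have "strict_mono T" unfolding strict_mono_Suc_iff using T_Suc B_pos by simp
  thus "l < l' \<Longrightarrow> T l < T l'" by (simp add: strict_mono_less)
qed

lemma T_mono_le: "l \<le> l' \<Longrightarrow> T l \<le> T l'"
  using T_mono_less by (cases "l = l'") (auto simp: less_le)

lemma T_cis_region:
  assumes "T l \<le> s" "s \<le> T (Suc l)" "0 \<le> \<rho>"
  shows "complex_of_real \<rho> * cis s \<in> fan_region \<alpha> \<beta> (l mod n)"
proof -
  define s' where "s' = s - 2 * pi * (l div n)"
  have c: "cis s' = cis s" unfolding s'_def
    using cis_shift_int[of "s - 2 * pi * (l div n)" "int (l div n)"] by simp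
  have "T (Suc l) = T (Suc (l mod n)) + 2 * pi * (l div n)"
  proof -
    have "T (Suc l) = T l + B l" by (rule T_Suc)
    also have "\<dots> = T (l mod n) + B (l mod n) + 2 * pi * (l div n)" using T_modn[of l] by simp
    also have "\<dots> = T (Suc (l mod n)) + 2 * pi * (l div n)" using T_Suc[of "l mod n"] by simp
    finally show ?thesis .
  qed
  moreover have "T l = T (l mod n) + 2 * pi * (l div n)" by (rule T_modn)
  ultimately have "T (l mod n) \<le> s'" "s' \<le> T (l mod n) + \<beta> (l mod n)"
    using assms T_Suc[of "l mod n"] unfolding s'_def by (auto simp: B_def)
  moreover have "T (l mod n) = ray_angle \<alpha> \<beta> (l mod n)"
    using T_ray[of "l mod n"] npos by simp
  ultimately show ?thesis unfolding fan_region_def using assms c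
    by (metis (mono_tags, lifting) mem_Collect_eq)
qed

lemma region_char:
  assumes "z \<in> fan_region \<alpha> \<beta> i" "z \<noteq> 0"
  shows "\<exists>t. z = complex_of_real (cmod z) * cis t \<and> ray_angle \<alpha> \<beta> i \<le> t \<and> t \<le> ray_angle \<alpha> \<beta> i + \<beta> i"
proof -
  obtain r t where z: "z = complex_of_real r * cis t" "0 \<le> r" "ray_angle \<alpha> \<beta> i \<le> t" "t \<le> ray_angle \<alpha> \<beta> i + \<beta> i"
    using assms(1) unfolding fan_region_def by blast
  have "cmod z = r" using z by (simp add: norm_mult)
  thus ?thesis using z by blast
qed

lemma interior_unique:
  assumes "i < n" "k < n" "ray_angle \<alpha> \<beta> i < s" "s < ray_angle \<alpha> \<beta> i + \<beta> i"
    and "cis s \<in> fan_region \<alpha> \<beta> k"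
  shows "k = i"
proof -
  obtain t where t: "cis s = complex_of_real (cmod (cis s)) * cis t"
    "ray_angle \<alpha> \<beta> k \<le> t" "t \<le> ray_angle \<alpha> \<beta> k + \<beta> k"
    using region_char[OF assms(5)] by auto
  have "cis s = cis t" using t(1) by simp
  then obtain q :: int where q: "s = t + 2 * pi * q" using cis_eq_imp by blast
  have Ti: "T i = ray_angle \<alpha> \<beta> i" "T k = ray_angle \<alpha> \<beta> k" using T_ray assms by auto
  have Ti1: "T (Suc i) = ray_angle \<alpha> \<beta> i + \<beta> i" "T (Suc k) = ray_angle \<alpha> \<beta> k + \<beta> k"
    using T_Suc Ti assms by (auto simp: B_def)
  have b: "\<alpha> \<le> T i" "\<alpha> \<le> T k" "T (Suc i) \<le> \<alpha> + 2*pi" "T (Suc k) \<le> \<alpha> + 2*pi"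
    using T_mono_le[of 0 i] T_mono_le[of 0 k] T_mono_le[of "Suc i" n] T_mono_le[of "Suc k" n] T_0 T_n assms
    by simp_all
  have "-1 < q" "q < 1"
  proof -
    have "2 * pi * q < 2 * pi * 1" using q b Ti Ti1 t assms by linarith
    thus "q < 1" by (subst (asm) mult_less_cancel_left_pos) auto
    have "2 * pi * (-1) < 2 * pi * q" using q b Ti Ti1 t assms by linarith
    thus "-1 < q" by (subst (asm) mult_less_cancel_left_pos) auto
  qed
  hence "q = 0" by simp
  hence st: "s = t" using q by simp
  show "k = i"
  proof (rule ccontr)
    assume "k \<noteq> i"
    hence "Suc k \<le> i \<or> Suc i \<le> k" by auto
    thus False
    proof
      assume "Suc k \<le> i" thus False using T_mono_le[of "Suc k" i] Ti Ti1 st t assms by linarith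
    next
      assume "Suc i \<le> k" thus False using T_mono_le[of "Suc i" k] Ti Ti1 st t assms by linarith
    qed
  qed
qed

lemma covering_aux: "T 0 \<le> s \<Longrightarrow> s < T N \<Longrightarrow> \<exists>l<N. T l \<le> s \<and> s < T (Suc l)"
proof (induction N)
  case 0 then show ?case by simp
next
  case (Suc N)
  show ?case
  proof (cases "s < T N")
    case True then obtain l where "l<N" "T l \<le> s \<and> s < T (Suc l)" using Suc.IH Suc.prems(1) by blast
    then show ?thesis by (intro exI[of _ l]) simp
  next
    case False then show ?thesis using Suc.prems by (intro exI[of _ N]) simp
  qed
qed

lemma covering: "\<exists>s l. cis s = cis t \<and> T n \<le> s \<and> s < T (2*n) \<and> T l \<le> s \<and> s < T (Suc l) \<and> 1 \<le> l"
proof -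
  define q where "q = \<lceil>(T n - t) / (2*pi)\<rceil>"
  define s where "s = t + 2 * pi * q"
  have c1: "(T n - t) / (2*pi) \<le> q" "q - 1 < (T n - t) / (2*pi)" unfolding q_def
    using ceiling_correct[of "(T n - t) / (2*pi)"] by auto
  have p: "0 < 2*pi" by simp
  have "T n - t \<le> q * (2*pi)" using c1(1) by (subst (asm) pos_divide_le_eq[OF p])
  moreover have "(q - 1) * (2*pi) < T n - t" using c1(2) by (subst (asm) pos_less_divide_eq[OF p])
  ultimately have "T n - t \<le> 2*pi*q" "2*pi*q < T n - t + 2*pi" by (simp_all add: algebra_simps del: mult_2 mult_2_right)
  moreover have "T (2*n) = T n + 2*pi" using T_add_n[of n] by (metis mult_2)
  ultimately have s1: "T n \<le> s" "s < T (2*n)" unfolding s_def by linarith+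
  have "T 0 \<le> s" using T_mono_le[of 0 n] s1 by linarith
  then obtain l where l: "T l \<le> s" "s < T (Suc l)" using covering_aux[of s "2*n"] s1 by blast
  have "1 \<le> l"
  proof (rule ccontr)
    assume "\<not> 1 \<le> l" hence "l = 0" by simp
    hence "s < T 1" using l by simp
    thus False using s1 T_mono_le[of 1 n] n3 by linarith
  qed
  moreover have "cis s = cis t" unfolding s_def by (rule cis_shift_int)
  ultimately show ?thesis using s1 l by (intro exI[of _ s] exI[of _ l]) simp
qed

definition Psi :: "(nat \<Rightarrow> real) \<Rightarrow> nat \<Rightarrow> real" where
  "Psi a l = T l + a (l mod n) / 2"

context
  fixes a :: "nat \<Rightarrow> real"
  assumes apos: "\<forall>k<n. 0 < a k"
    and arec: "\<forall>k<n. a k + a (Suc k mod n) = 2 * \<beta> k"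
begin

lemma A_rec: "a (l mod n) + a (Suc l mod n) = 2 * B l"
proof -
  have "l mod n < n" using npos by simp
  hence "a (l mod n) + a (Suc (l mod n) mod n) = 2 * \<beta> (l mod n)" using arec by blast
  thus ?thesis by (simp add: mod_Suc_eq B_def)
qed

lemma A_pos: "0 < a (l mod n)" using apos npos by simp

lemma Psi_mid: "Psi a l + Psi a (Suc l) = 2 * T (Suc l)"
  using A_rec[of l] T_Suc[of l] unfolding Psi_def by simp

lemma Psi_mono: "strict_mono (Psi a)"
  unfolding strict_mono_Suc_iff
proof
  fix l
  show "Psi a l < Psi a (Suc l)"
    using A_rec[of l] T_Suc[of l] A_pos[of "Suc l"] unfolding Psi_def by simp
qed

lemma Psi_bounds: "T l < Psi a l" "Psi a l < T (Suc l)"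
  using A_rec[of l] T_Suc[of l] A_pos[of "Suc l"] A_pos[of l] unfolding Psi_def by simp_all

lemma Psi_mult: "Psi a (k + n * q) = Psi a k + 2 * pi * q"
  using T_mult[of k q] unfolding Psi_def by simp

lemma Psi_modn: "Psi a l = Psi a (l mod n) + 2 * pi * (l div n)"
  using Psi_mult[of "l mod n" "l div n"] by simp

lemma cis_Psi: "cis (Psi a l) = cis (Psi a (l mod n))"
  using Psi_modn[of l] cis_shift_int[of "Psi a (l mod n)" "int (l div n)"] by simp

lemma lift:
  assumes "T n \<le> s" "s \<le> T (2*n)" "k < n"
  shows "\<exists>l'. l' mod n = k \<and> \<bar>s - Psi a l'\<bar> \<le> pi"
proof -
  have t2: "T (2*n) = T n + 2*pi" using T_add_n[of n] by (metis mult_2)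
  have b1: "T 0 \<le> T k" "T (Suc k) \<le> T n" using T_mono_le assms by simp_all
  have p1: "T n - 2*pi < Psi a k" "Psi a k < T n" using Psi_bounds[of k] b1 T_0 T_n by simp_all
  define d where "d = s - Psi a k"
  have d: "0 < d" "d < 4 * pi" using p1 assms t2 unfolding d_def by simp_all
  have "\<exists>q::nat. \<bar>d - 2 * pi * q\<bar> \<le> pi"
  proof (cases "d \<le> pi")
    case True then show ?thesis using d by (intro exI[of _ 0]) simp
  next
    case False
    show ?thesis
    proof (cases "d \<le> 3 * pi")
      case True then show ?thesis using False by (intro exI[of _ 1]) simp
    next
      case False then show ?thesis using d by (intro exI[of _ 2]) simp
    qed
  qed
  then obtain q :: nat where q: "\<bar>d - 2 * pi * q\<bar> \<le> pi" by blast
  have "(k + n * q) mod n = k" using assms(3) by simp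
  moreover have "\<bar>s - Psi a (k + n * q)\<bar> \<le> pi" using q Psi_mult[of k q] unfolding d_def
    by (simp add: algebra_simps)
  ultimately show ?thesis by blast
qed

definition uu :: "nat \<Rightarrow> complex" where "uu k = cis (Psi a k)"

lemma inner_uu: "inner (complex_of_real \<rho> * cis s) (uu (l mod n)) = \<rho> * cos (s - Psi a l)"
  unfolding uu_def using cis_Psi[of l] inner_rcis by metis

lemma normal_char:
  assumes "i < n" "x \<noteq> 0"
  shows "(\<forall>k<n. inner x (uu k) \<le> inner x (uu i)) \<longleftrightarrow> x \<in> fan_region \<alpha> \<beta> i"
proof
  assume cond: "\<forall>k<n. inner x (uu k) \<le> inner x (uu i)"
  define \<rho> where "\<rho> = cmod x"
  have rho: "0 < \<rho>" using assms unfolding \<rho>_def by simp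
  obtain s l where sl: "cis s = cis (Arg x)" "T n \<le> s" "s < T (2*n)" "T l \<le> s" "s < T (Suc l)" "1 \<le> l"
    using covering by blast
  have x: "x = complex_of_real \<rho> * cis s" unfolding \<rho>_def sl(1)
    by (metis rcis_cmod_Arg rcis_def)
  obtain l' where l': "l' mod n = i" "\<bar>s - Psi a l'\<bar> \<le> pi" using lift[of s i] sl assms by auto
  have mid1: "Psi a (l - 1) + Psi a l \<le> 2 * s" using Psi_mid[of "l - 1"] sl by simp
  have mid2: "2 * s \<le> Psi a l + Psi a (Suc l)" using Psi_mid[of l] sl by simp
  note nr = nearest[OF Psi_mono sl(6) mid1 mid2]
  have c1: "cos (s - Psi a l') \<le> cos (s - Psi a l)" using cos_abs_le[OF nr(1)[of l'] l'(2)] .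
  have "inner x (uu (l mod n)) \<le> inner x (uu (l' mod n))" using cond l' npos by simp
  hence "\<rho> * cos (s - Psi a l) \<le> \<rho> * cos (s - Psi a l')" unfolding x inner_uu .
  hence "cos (s - Psi a l) \<le> cos (s - Psi a l')" using rho by simp
  hence "cos (s - Psi a l') = cos (s - Psi a l)" using c1 by simp
  hence "\<bar>s - Psi a l'\<bar> = \<bar>s - Psi a l\<bar>" using l' nr(1)[of l'] by (intro cos_abs_eq) simp_all
  hence cases: "l' = l \<or> (l' = Suc l \<and> 2 * s = Psi a l + Psi a (Suc l)) \<or> (l' = l - 1 \<and> 2 * s = Psi a (l - 1) + Psi a l)"
    using nr(2) by blast
  have rho0: "0 \<le> \<rho>" using rho by simp
  show "x \<in> fan_region \<alpha> \<beta> i"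
    using cases
  proof (elim disjE conjE)
    assume "l' = l"
    thus ?thesis using T_cis_region[of l s \<rho>] sl(4,5) rho0 l'(1) by (subst x) simp
  next
    assume h: "l' = Suc l" "2 * s = Psi a l + Psi a (Suc l)"
    hence "s = T (Suc l)" using Psi_mid[of l] by simp
    moreover have "T (Suc l) \<le> T (Suc (Suc l))" using T_mono_le by simp
    ultimately show ?thesis using T_cis_region[of "Suc l" s \<rho>] rho0 l'(1) h by (subst x) simp
  next
    assume h: "l' = l - 1" "2 * s = Psi a (l - 1) + Psi a l"
    hence "s = T l" using Psi_mid[of "l - 1"] sl(6) by simp
    moreover have "T (l - 1) \<le> T l" using T_mono_le by simp
    ultimately show ?thesis using T_cis_region[of "l - 1" s \<rho>] rho0 l'(1) h sl(6) by (subst x) simp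
  qed
next
  assume xr: "x \<in> fan_region \<alpha> \<beta> i"
  obtain t where t: "x = complex_of_real (cmod x) * cis t" "ray_angle \<alpha> \<beta> i \<le> t"
    "t \<le> ray_angle \<alpha> \<beta> i + \<beta> i" using region_char[OF xr assms(2)] by blast
  define \<rho> where "\<rho> = cmod x"
  define s where "s = t + 2 * pi"
  define l where "l = i + n"
  have x: "x = complex_of_real \<rho> * cis s" unfolding \<rho>_def s_def
    using t(1) cis_shift_int[of t 1] by simp
  have Tl: "T l = ray_angle \<alpha> \<beta> i + 2 * pi" unfolding l_def using T_add_n[of i] T_ray[of i] assms by simp
  have TSl: "T (Suc l) = T l + \<beta> i" using T_Suc[of l] assms unfolding l_def by (simp add: B_def)
  have sl: "T l \<le> s" "s \<le> T (Suc l)" using Tl TSl t unfolding s_def by simp_all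
  have "T n \<le> T l" "T (Suc l) \<le> T (2 * n)" using T_mono_le assms unfolding l_def by simp_all
  hence sr: "T n \<le> s" "s \<le> T (2*n)" using sl by simp_all
  have l1: "1 \<le> l" using n3 unfolding l_def by simp
  have mid1: "Psi a (l - 1) + Psi a l \<le> 2 * s" using Psi_mid[of "l - 1"] sl l1 by simp
  have mid2: "2 * s \<le> Psi a l + Psi a (Suc l)" using Psi_mid[of l] sl by simp
  note nr = nearest[OF Psi_mono l1 mid1 mid2]
  have lm: "l mod n = i" unfolding l_def using assms by simp
  show "\<forall>k<n. inner x (uu k) \<le> inner x (uu i)"
  proof (intro allI impI)
    fix k assume k: "k < n"
    obtain l' where l': "l' mod n = k" "\<bar>s - Psi a l'\<bar> \<le> pi" using lift[OF sr k] by blast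
    have c1: "cos (s - Psi a l') \<le> cos (s - Psi a l)" using cos_abs_le[OF nr(1)[of l'] l'(2)] .
    have "\<rho> * cos (s - Psi a l') \<le> \<rho> * cos (s - Psi a l)"
      using c1 unfolding \<rho>_def by (simp add: mult_left_mono)
    thus "inner x (uu k) \<le> inner x (uu i)"
      using inner_uu[of \<rho> s l'] inner_uu[of \<rho> s l] l' lm x by simp
  qed
qed

lemma norm_uu: "norm (uu k) = 1" unfolding uu_def by simp

abbreviation "PP \<equiv> convex hull (uu ` {..<n})"

lemma PP_cball: "PP \<subseteq> cball 0 1"
  by (rule hull_minimal) (auto simp: norm_uu)


lemma uu_extreme:
  assumes "i < n" shows "uu i extreme_point_of PP"
  unfolding extreme_point_of_def
proof (intro conjI ballI)
  show "uu i \<in> PP" using assms by (intro hull_inc) simp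
  fix p q assume pq: "p \<in> PP" "q \<in> PP"
  show "uu i \<notin> open_segment p q"
  proof
    assume "uu i \<in> open_segment p q"
    then obtain t where t: "p \<noteq> q" "0 < t" "t < 1" "uu i = (1 - t) *\<^sub>R p + t *\<^sub>R q"
      by (auto simp: in_segment)
    define w where "w = uu i"
    have w1: "norm w = 1" unfolding w_def by (rule norm_uu)
    have np: "norm p \<le> 1" "norm q \<le> 1" using pq PP_cball by auto
    have ip: "inner w p \<le> 1" "inner w q \<le> 1"
      using norm_cauchy_schwarz[of w p] norm_cauchy_schwarz[of w q] w1 np by simp_all
    have "1 = inner w w" using w1 by (simp add: power2_norm_eq_inner[symmetric])
    also have "\<dots> = (1 - t) * inner w p + t * inner w q"
      using t(4) unfolding w_def[symmetric] by (metis inner_add_right inner_scaleR_right)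
    finally have e: "1 = (1 - t) * inner w p + t * inner w q" .
    have "inner w p = 1"
    proof (rule ccontr)
      assume "inner w p \<noteq> 1" hence "inner w p < 1" using ip by simp
      hence "(1 - t) * inner w p < (1 - t) * 1" using t by simp
      moreover have "t * inner w q \<le> t * 1" using ip t by (intro mult_left_mono) simp_all
      ultimately show False using e by simp
    qed
    moreover have "inner w q = 1"
    proof (rule ccontr)
      assume "inner w q \<noteq> 1" hence "inner w q < 1" using ip by simp
      hence "t * inner w q < t * 1" using t by simp
      moreover have "(1 - t) * inner w p \<le> (1 - t) * 1" using ip t by (intro mult_left_mono) simp_all
      ultimately show False using e by simp
    qed
    ultimately have "p = w" "q = w" using unit_inner_eq w1 np by blast+
    thus False using t(1) by simp
  qed
qed

lemma normal_cone_uu: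
  assumes "i < n" shows "normal_cone PP (uu i) = fan_region \<alpha> \<beta> i"
proof -
  have "normal_cone PP (uu i) = {x. \<forall>k<n. inner x (uu k) \<le> inner x (uu i)}"
  proof (intro set_eqI iffI)
    fix x assume "x \<in> normal_cone PP (uu i)"
    thus "x \<in> {x. \<forall>k<n. inner x (uu k) \<le> inner x (uu i)}"
      unfolding normal_cone_def by (auto intro: hull_inc)
  next
    fix x assume x: "x \<in> {x. \<forall>k<n. inner x (uu k) \<le> inner x (uu i)}"
    have "PP \<subseteq> {w. inner x w \<le> inner x (uu i)}"
      by (rule hull_minimal) (use x convex_halfspace_le in auto)
    thus "x \<in> normal_cone PP (uu i)" unfolding normal_cone_def by auto
  qed
  also have "\<dots> = fan_region \<alpha> \<beta> i"
  proof (intro set_eqI)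
    fix x show "x \<in> {x. \<forall>k<n. inner x (uu k) \<le> inner x (uu i)} \<longleftrightarrow> x \<in> fan_region \<alpha> \<beta> i"
    proof (cases "x = 0")
      case True
      have "0 = complex_of_real 0 * cis (ray_angle \<alpha> \<beta> i) \<and> (0::real) \<le> 0 \<and> ray_angle \<alpha> \<beta> i \<le> ray_angle \<alpha> \<beta> i
          \<and> ray_angle \<alpha> \<beta> i \<le> ray_angle \<alpha> \<beta> i + \<beta> i" using bpos assms by force
      hence "0 \<in> fan_region \<alpha> \<beta> i" unfolding fan_region_def by blast
      thus ?thesis using True by simp
    next
      case False thus ?thesis using normal_char[OF assms False] by simp
    qed
  qed
  finally show ?thesis .
qed

lemma inscribable_of_a: "inscribable n \<alpha> \<beta>"
proof -
  have ext: "{v. v extreme_point_of PP} = uu ` {..<n}"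
  proof
    show "{v. v extreme_point_of PP} \<subseteq> uu ` {..<n}" using extreme_point_of_convex_hull by blast
    show "uu ` {..<n} \<subseteq> {v. v extreme_point_of PP}" using uu_extreme by auto
  qed
  have "polytope PP" unfolding polytope_def by blast
  moreover have "\<forall>v. v extreme_point_of PP \<longrightarrow> dist v 0 = 1"
  proof (intro allI impI)
    fix v assume "v extreme_point_of PP"
    hence "v \<in> uu ` {..<n}" using ext by blast
    thus "dist v 0 = 1" using norm_uu by auto
  qed
  moreover have "normal_fan_regions PP = fan_regions n \<alpha> \<beta>"
  proof -
    have "normal_fan_regions PP = (\<lambda>v. normal_cone PP v) ` {v. v extreme_point_of PP}"
      unfolding normal_fan_regions_def by auto
    also have "\<dots> = (\<lambda>i. normal_cone PP (uu i)) ` {..<n}" unfolding ext by (simp add: image_image)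
    also have "\<dots> = fan_region \<alpha> \<beta> ` {..<n}" using normal_cone_uu by (intro image_cong) auto
    finally show ?thesis unfolding fan_regions_def .
  qed
  ultimately show ?thesis unfolding inscribable_def by blast
qed

end

lemma succ_cis:
  assumes "k < n"
  shows "cis (ray_angle \<alpha> \<beta> k + \<beta> k) = cis (ray_angle \<alpha> \<beta> (Suc k mod n))"
proof -
  have e: "ray_angle \<alpha> \<beta> k + \<beta> k = ray_angle \<alpha> \<beta> (Suc k)" unfolding ray_angle_def by simp
  show ?thesis
  proof (cases "Suc k < n")
    case True then show ?thesis using e by simp
  next
    case False
    hence "Suc k = n" using assms by simp
    hence h: "ray_angle \<alpha> \<beta> (Suc k) = \<alpha> + 2 * pi" "Suc k mod n = 0" using bsum by (simp_all add: ray_angle_def)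
    have "ray_angle \<alpha> \<beta> k + \<beta> k = \<alpha> + 2*pi" using e h by simp
    hence "cis (ray_angle \<alpha> \<beta> k + \<beta> k) = cis \<alpha>" using cis_shift_int[of \<alpha> 1] by simp
    moreover have "ray_angle \<alpha> \<beta> (Suc k mod n) = \<alpha>" using h by (simp add: ray_angle_def)
    ultimately show ?thesis by simp
  qed
qed

lemma cis_in_region:
  assumes "ray_angle \<alpha> \<beta> i \<le> t" "t \<le> ray_angle \<alpha> \<beta> i + \<beta> i"
  shows "cis t \<in> fan_region \<alpha> \<beta> i"
proof -
  have "cis t = complex_of_real 1 * cis t \<and> (0::real) \<le> 1 \<and> ray_angle \<alpha> \<beta> i \<le> t \<and> t \<le> ray_angle \<alpha> \<beta> i + \<beta> i"
    using assms by simp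
  thus ?thesis unfolding fan_region_def by blast
qed

lemma a_of_inscribable:
  assumes "inscribable n \<alpha> \<beta>"
  shows "\<exists>a. (\<forall>k<n. 0 < a k) \<and> (\<forall>k<n. a k + a (Suc k mod n) = 2 * \<beta> k)"
proof -
  obtain P c r where P: "polytope P" and circ: "\<forall>v. v extreme_point_of P \<longrightarrow> dist v c = r"
    and fan: "normal_fan_regions P = fan_regions n \<alpha> \<beta>"
    using assms unfolding inscribable_def by blast
  define \<theta> where "\<theta> = ray_angle \<alpha> \<beta>"
  have "\<forall>i<n. \<exists>w. w extreme_point_of P \<and> normal_cone P w = fan_region \<alpha> \<beta> i"
  proof (intro allI impI)
    fix i assume "i < n"
    hence "fan_region \<alpha> \<beta> i \<in> normal_fan_regions P" using fan unfolding fan_regions_def by simp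
    thus "\<exists>w. w extreme_point_of P \<and> normal_cone P w = fan_region \<alpha> \<beta> i"
      unfolding normal_fan_regions_def by auto
  qed
  then obtain v where v: "\<And>i. i < n \<Longrightarrow> v i extreme_point_of P \<and> normal_cone P (v i) = fan_region \<alpha> \<beta> i"
    by metis
  have vP: "i < n \<Longrightarrow> v i \<in> P" for i using v extreme_point_of_def by blast
  have vinj: "i < n \<Longrightarrow> k < n \<Longrightarrow> v i = v k \<Longrightarrow> i = k" for i k
  proof -
    assume ik: "i < n" "k < n" "v i = v k"
    have "cis (\<theta> i + \<beta> i / 2) \<in> fan_region \<alpha> \<beta> i"
      using bpos ik by (intro cis_in_region) (auto simp: \<theta>_def)
    hence "cis (\<theta> i + \<beta> i / 2) \<in> fan_region \<alpha> \<beta> k" using v ik by metis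
    thus "i = k" using interior_unique[of i k] ik bpos unfolding \<theta>_def by force
  qed
  have r0: "0 \<le> r" using circ v[of 0] npos by (metis zero_le_dist)
  have rpos: "0 < r"
  proof (rule ccontr)
    assume "\<not> 0 < r" hence "r = 0" using r0 by simp
    hence "v 0 = c" "v 1 = c" using circ v[of 0] v[of 1] n3 by auto
    thus False using vinj[of 0 1] n3 by simp
  qed
  define u where "u i = (1 / r) *\<^sub>R (v i - c)" for i
  have vu: "i < n \<Longrightarrow> v i - c = r *\<^sub>R u i" for i unfolding u_def using rpos by simp
  have nu: "i < n \<Longrightarrow> norm (u i) = 1" for i
  proof -
    assume i: "i < n"
    have "norm (v i - c) = r" using circ v[OF i] by (simp add: dist_norm)
    thus ?thesis unfolding u_def using rpos by simp
  qed
  have uinj: "i < n \<Longrightarrow> k < n \<Longrightarrow> u i = u k \<Longrightarrow> i = k" for i k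
    using vu vinj by (metis diff_add_cancel)
  have Pc: "P \<subseteq> cball c r"
  proof -
    have "P = convex hull {x. x extreme_point_of P}"
      using P by (intro Krein_Milman_Minkowski) (simp_all add: polytope_imp_compact polytope_imp_convex)
    also have "\<dots> \<subseteq> cball c r" using circ by (intro hull_minimal) (auto simp: dist_commute)
    finally show ?thesis .
  qed
  have NC: "x \<in> fan_region \<alpha> \<beta> i \<Longrightarrow> i < n \<Longrightarrow> k < n \<Longrightarrow> inner x (u k) \<le> inner x (u i)" for x i k
  proof -
    assume x: "x \<in> fan_region \<alpha> \<beta> i" and ik: "i < n" "k < n"
    have "x \<in> normal_cone P (v i)" using v ik x by simp
    hence "inner x (v k) \<le> inner x (v i)" using vP ik unfolding normal_cone_def by blast
    hence "inner x (v k - c) \<le> inner x (v i - c)" by (simp add: inner_diff_right)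
    hence "r * inner x (u k) \<le> r * inner x (u i)" using vu ik by simp
    thus ?thesis using rpos by simp
  qed
  have uR: "i < n \<Longrightarrow> u i \<in> fan_region \<alpha> \<beta> i" for i
  proof -
    assume i: "i < n"
    have "u i \<in> normal_cone P (v i)" unfolding normal_cone_def
    proof (intro CollectI ballI)
      fix w assume "w \<in> P"
      hence "norm (w - c) \<le> r" using Pc by (auto simp: dist_norm norm_minus_commute)
      hence "inner (u i) (w - c) \<le> r" using norm_cauchy_schwarz[of "u i" "w - c"] nu[OF i] by simp
      moreover have "inner (u i) (v i - c) = r"
        using vu[OF i] nu[OF i] power2_norm_eq_inner[of "u i"] by simp
      ultimately show "inner (u i) w \<le> inner (u i) (v i)" by (simp add: inner_diff_right)
    qed
    thus ?thesis using v i by simp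
  qed
  have "\<forall>i<n. \<exists>t. u i = cis t \<and> \<theta> i \<le> t \<and> t \<le> \<theta> i + \<beta> i"
  proof (intro allI impI)
    fix i assume i: "i < n"
    have "u i \<noteq> 0" using nu[OF i] by auto
    then obtain t where "u i = complex_of_real (cmod (u i)) * cis t" "\<theta> i \<le> t" "t \<le> \<theta> i + \<beta> i"
      using region_char[OF uR[OF i]] unfolding \<theta>_def by blast
    thus "\<exists>t. u i = cis t \<and> \<theta> i \<le> t \<and> t \<le> \<theta> i + \<beta> i" using nu[OF i] by auto
  qed
  then obtain \<psi> where psi: "\<And>i. i < n \<Longrightarrow> u i = cis (\<psi> i) \<and> \<theta> i \<le> \<psi> i \<and> \<psi> i \<le> \<theta> i + \<beta> i"
    by metis
  have one: "i < n \<Longrightarrow> k < n \<Longrightarrow> 1 \<le> inner (u i) (u k) \<Longrightarrow> k = i" for i k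
  proof -
    assume ik: "i < n" "k < n" "1 \<le> inner (u i) (u k)"
    have "inner (u i) (u k) \<le> 1" using norm_cauchy_schwarz[of "u i" "u k"] nu ik by simp
    hence "u k = u i" using unit_inner_eq[of "u i" "u k"] nu ik by simp
    thus "k = i" using uinj ik by simp
  qed
  have uu1: "i < n \<Longrightarrow> inner (u i) (u i) = 1" for i using nu power2_norm_eq_inner[of "u i"] by simp
  define sc where "sc k = Suc k mod n" for k
  have sc_lt: "sc k < n" for k unfolding sc_def using npos by simp
  have sc_ne: "k < n \<Longrightarrow> sc k \<noteq> k" for k
  proof (cases "Suc k < n")
    case True then show ?thesis unfolding sc_def by simp
  next
    case False
    assume k: "k < n"
    hence "Suc k = n" using False by simp
    thus ?thesis unfolding sc_def using n3 by auto
  qed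
  have dk: "k < n \<Longrightarrow> cis (\<theta> k + \<beta> k) \<in> fan_region \<alpha> \<beta> k \<and> cis (\<theta> k + \<beta> k) \<in> fan_region \<alpha> \<beta> (sc k)" for k
  proof -
    assume k: "k < n"
    have "cis (\<theta> k + \<beta> k) \<in> fan_region \<alpha> \<beta> k" using bpos k by (intro cis_in_region) (auto simp: \<theta>_def)
    moreover have "cis (\<theta> (sc k)) \<in> fan_region \<alpha> \<beta> (sc k)" using bpos sc_lt[of k]
      by (intro cis_in_region) (auto simp: \<theta>_def)
    ultimately show ?thesis using succ_cis[OF k] unfolding \<theta>_def sc_def by simp
  qed
  have fpos: "k < n \<Longrightarrow> \<psi> k < \<theta> k + \<beta> k" for k
  proof (rule ccontr)
    assume k: "k < n" and "\<not> \<psi> k < \<theta> k + \<beta> k"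
    hence "\<psi> k = \<theta> k + \<beta> k" using psi[OF k] by simp
    hence "u k \<in> fan_region \<alpha> \<beta> (sc k)" using dk[OF k] psi[OF k] by simp
    hence "inner (u k) (u k) \<le> inner (u k) (u (sc k))" using NC sc_lt k by blast
    hence "sc k = k" using one[of k "sc k"] uu1 k sc_lt by simp
    thus False using sc_ne k by simp
  qed
  have epos': "k < n \<Longrightarrow> \<theta> (sc k) < \<psi> (sc k)" for k
  proof (rule ccontr)
    assume k: "k < n" and "\<not> \<theta> (sc k) < \<psi> (sc k)"
    hence "\<psi> (sc k) = \<theta> (sc k)" using psi[OF sc_lt[of k]] by simp
    hence "u (sc k) = cis (\<theta> k + \<beta> k)" using psi[OF sc_lt[of k]] succ_cis[OF k]
      unfolding \<theta>_def sc_def by simp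
    hence "u (sc k) \<in> fan_region \<alpha> \<beta> k" using dk[OF k] by simp
    hence "inner (u (sc k)) (u (sc k)) \<le> inner (u (sc k)) (u k)" using NC sc_lt k by blast
    hence "k = sc k" using one[of "sc k" k] uu1 k sc_lt by simp
    thus False using sc_ne[OF k] by simp
  qed
  have epos: "j < n \<Longrightarrow> \<theta> j < \<psi> j" for j
  proof -
    assume j: "j < n"
    have "\<exists>k<n. sc k = j"
    proof (cases j)
      case 0 thus ?thesis using npos unfolding sc_def by (intro exI[of _ "n - 1"]) simp
    next
      case (Suc j') thus ?thesis using j unfolding sc_def by (intro exI[of _ j']) simp
    qed
    thus ?thesis using epos' by blast
  qed
  have feq: "k < n \<Longrightarrow> \<theta> k + \<beta> k - \<psi> k = \<psi> (sc k) - \<theta> (sc k)" for k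
  proof -
    assume k: "k < n"
    define d where "d = cis (\<theta> k + \<beta> k)"
    have "inner d (u (sc k)) \<le> inner d (u k)" using NC dk[OF k] sc_lt k unfolding d_def by blast
    moreover have "inner d (u k) \<le> inner d (u (sc k))" using NC dk[OF k] sc_lt k unfolding d_def by blast
    ultimately have "inner d (u k) = inner d (u (sc k))" by simp
    moreover have "inner d (u k) = cos (\<theta> k + \<beta> k - \<psi> k)" using psi[OF k] unfolding d_def by (simp add: inner_cis)
    moreover have "d = cis (\<theta> (sc k))" using succ_cis[OF k] unfolding d_def \<theta>_def sc_def by simp
    hence "inner d (u (sc k)) = cos (\<theta> (sc k) - \<psi> (sc k))" using psi[OF sc_lt[of k]] by (simp add: inner_cis)
    ultimately have ce: "cos (\<theta> k + \<beta> k - \<psi> k) = cos (\<theta> (sc k) - \<psi> (sc k))" by simp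
    have b1: "\<bar>\<theta> k + \<beta> k - \<psi> k\<bar> \<le> pi" using psi[OF k] bpos[rule_format, OF k] by (simp add: abs_le_iff)
    have b2: "\<bar>\<theta> (sc k) - \<psi> (sc k)\<bar> \<le> pi" using psi[OF sc_lt[of k]] bpos[rule_format, OF sc_lt[of k]]
      by (simp add: abs_le_iff)
    have "\<bar>\<theta> k + \<beta> k - \<psi> k\<bar> = \<bar>\<theta> (sc k) - \<psi> (sc k)\<bar>" using cos_abs_eq[OF ce b1 b2] .
    thus ?thesis using fpos[OF k] epos[OF sc_lt[of k]] by simp
  qed
  define a where "a k = 2 * (\<psi> k - \<theta> k)" for k
  have "\<forall>k<n. 0 < a k" using epos unfolding a_def by simp
  moreover have "\<forall>k<n. a k + a (Suc k mod n) = 2 * \<beta> k"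
  proof (intro allI impI)
    fix k assume k: "k < n"
    show "a k + a (Suc k mod n) = 2 * \<beta> k" using feq[OF k] unfolding a_def sc_def by (simp add: algebra_simps)
  qed
  ultimately show ?thesis by blast
qed

lemma geo_iff: "inscribable n \<alpha> \<beta> \<longleftrightarrow> (\<exists>a. (\<forall>k<n. 0 < a k) \<and> (\<forall>k<n. a k + a (Suc k mod n) = 2 * \<beta> k))"
  using a_of_inscribable inscribable_of_a by blast

lemma rec_ext:
  assumes "\<forall>k<n. a k + a (Suc k mod n) = 2 * \<beta> k"
  shows "a (l mod n) + a (Suc l mod n) = 2 * B l"
proof -
  have "l mod n < n" using npos by simp
  hence "a (l mod n) + a (Suc (l mod n) mod n) = 2 * \<beta> (l mod n)" using assms by blast
  thus ?thesis by (simp add: mod_Suc_eq B_def)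
qed

lemma tele:
  assumes "\<And>l. A l + A (Suc l) = 2 * B l"
  shows "2 * (\<Sum>k<N. (-1)^k * B (j + k)) = A j - (-1)^N * A (j + N)"
proof (induction N)
  case 0 then show ?case by simp
next
  case (Suc N)
  have "2 * (\<Sum>k<Suc N. (-1)^k * B (j + k)) = 2 * (\<Sum>k<N. (-1)^k * B (j + k)) + (-1)^N * (2 * B (j + N))"
    by (simp add: algebra_simps)
  also have "\<dots> = A j - (-1)^N * A (j + N) + (-1)^N * (A (j + N) + A (Suc (j + N)))"
    using Suc assms[of "j + N"] by simp
  also have "\<dots> = A j - (-1)^(Suc N) * A (j + Suc N)" by (simp add: algebra_simps)
  finally show ?case .
qed

lemma B_shift_mod: "B (l mod n + i) = B (l + i)"
  unfolding B_def by (simp add: mod_add_left_eq)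

lemma odd_char:
  assumes "odd n"
  shows "(\<exists>a. (\<forall>k<n. 0 < a k) \<and> (\<forall>k<n. a k + a (Suc k mod n) = 2 * \<beta> k))
     \<longleftrightarrow> (\<forall>j<n. (\<Sum>k<n. (-1) ^ k * \<beta> ((j + k) mod n)) > 0)"
proof -
  have sB: "(\<Sum>k<n. (-1) ^ k * \<beta> ((j + k) mod n)) = (\<Sum>k<n. (-1) ^ k * B (j + k))" for j
    unfolding B_def ..
  show ?thesis
  proof
    assume "\<exists>a. (\<forall>k<n. 0 < a k) \<and> (\<forall>k<n. a k + a (Suc k mod n) = 2 * \<beta> k)"
    then obtain a where apos: "\<forall>k<n. 0 < a k" and arec: "\<forall>k<n. a k + a (Suc k mod n) = 2 * \<beta> k" by blast
    show "\<forall>j<n. (\<Sum>k<n. (-1) ^ k * \<beta> ((j + k) mod n)) > 0"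
    proof (intro allI impI)
      fix j assume j: "j < n"
      have "2 * (\<Sum>k<n. (-1)^k * B (j + k)) = a (j mod n) - (-1)^n * a ((j + n) mod n)"
        using tele[where A="\<lambda>l. a (l mod n)" and N=n and j=j] rec_ext[OF arec] by blast
      also have "\<dots> = 2 * a j" using j assms by simp
      finally show "(\<Sum>k<n. (-1) ^ k * \<beta> ((j + k) mod n)) > 0" unfolding sB using apos j by simp
    qed
  next
    assume pos: "\<forall>j<n. (\<Sum>k<n. (-1) ^ k * \<beta> ((j + k) mod n)) > 0"
    define a where "a j = (\<Sum>k<n. (-1)^k * B (j + k))" for j
    have "\<forall>k<n. 0 < a k" using pos unfolding a_def sB by simp
    moreover have "\<forall>k<n. a k + a (Suc k mod n) = 2 * \<beta> k"
    proof (intro allI impI)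
      fix k assume k: "k < n"
      define f where "f i = (-1)^i * B (k + i)" for i
      have a2: "a (Suc k mod n) = (\<Sum>i<n. (-1)^i * B (Suc k + i))" unfolding a_def
        by (simp add: B_shift_mod)
      have fs: "f (Suc i) = - ((-1)^i * B (Suc k + i))" for i unfolding f_def by simp
      have "(\<Sum>i<Suc n. f i) = f 0 + (\<Sum>i<n. f (Suc i))" by (rule sum.lessThan_Suc_shift)
      moreover have "(\<Sum>i<Suc n. f i) = (\<Sum>i<n. f i) + f n" by simp
      moreover have "f n = - B k" unfolding f_def using assms by simp
      moreover have "f 0 = B k" unfolding f_def by simp
      moreover have "(\<Sum>i<n. f (Suc i)) = - (\<Sum>i<n. (-1)^i * B (Suc k + i))"
        unfolding fs by (simp add: sum_negf)
      moreover have "a k = (\<Sum>i<n. f i)" unfolding a_def f_def ..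
      ultimately have "a k + a (Suc k mod n) = 2 * B k" using a2 by linarith
      thus "a k + a (Suc k mod n) = 2 * \<beta> k" using k by (simp add: B_def)
    qed
    ultimately show "\<exists>a. (\<forall>k<n. 0 < a k) \<and> (\<forall>k<n. a k + a (Suc k mod n) = 2 * \<beta> k)" by blast
  qed
qed

lemma even_split:
  assumes "n = 2 * m"
  shows "(\<Sum>i<m. \<beta> (2 * i)) + (\<Sum>i<m. \<beta> (2 * i + 1)) = 2 * pi"
proof -
  have "(\<Sum>i<2 * m. if even i then \<beta> i else \<beta> i) = (\<Sum>i<m. \<beta> (2 * i)) + (\<Sum>i<m. \<beta> (2 * i + 1))"
    by (rule sum_split_even_odd)
  thus ?thesis using bsum assms by simp
qed

lemma virt_even:
  assumes "n = 2 * m" "virtually_inscribable n \<alpha> \<beta>"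
  shows "(\<Sum>i<m. \<beta> (2 * i)) = pi"
proof -
  define E where "E = (\<Sum>i<m. \<beta> (2 * i))"
  obtain v where v: "v \<noteq> 0" "refl_comp \<alpha> \<beta> n v = v" using assms(2) unfolding virtually_inscribable_def by blast
  have "cis (2 * E) * v = v" using v refl_comp_even[of \<alpha> \<beta> m v] assms(1) unfolding E_def by simp
  hence "cis (2 * E) = 1" using v(1) by (metis mult_cancel_right2)
  hence "exp (\<i> * complex_of_real (2 * E)) = 1" by (simp add: cis_conv_exp)
  then obtain q :: int where q: "2 * E = real_of_int (2 * q) * pi" by (auto simp: exp_eq_1)
  hence Eq: "E = q * pi" by simp
  have m1: "1 \<le> m" using assms(1) n3 by simp
  have "0 < E" unfolding E_def
  proof -
    have "0 < \<beta> (2 * 0)" using bpos assms(1) m1 by simp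
    moreover have "\<forall>i<m. 0 \<le> \<beta> (2 * i)"
    proof (intro allI impI)
      fix i assume "i < m" hence "2 * i < n" using assms(1) by simp
      thus "0 \<le> \<beta> (2 * i)" using bpos by (simp add: less_imp_le)
    qed
    ultimately show "0 < (\<Sum>i<m. \<beta> (2 * i))" using m1
      by (intro sum_pos2[where i=0]) auto
  qed
  moreover have "E < 2 * pi"
  proof -
    have "0 < \<beta> (2 * 0 + 1)" using bpos assms(1) m1 by simp
    moreover have "\<forall>i<m. 0 \<le> \<beta> (2 * i + 1)"
    proof (intro allI impI)
      fix i assume "i < m" hence "2 * i + 1 < n" using assms(1) by simp
      thus "0 \<le> \<beta> (2 * i + 1)" using bpos by (simp add: less_imp_le)
    qed
    ultimately have "0 < (\<Sum>i<m. \<beta> (2 * i + 1))" using m1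
      by (intro sum_pos2[where i=0]) auto
    thus ?thesis using even_split[OF assms(1)] unfolding E_def by simp
  qed
  ultimately have "0 < q" "q < 2" using Eq by (simp_all add: zero_less_mult_iff)
  hence "q = 1" by simp
  thus ?thesis using Eq unfolding E_def by simp
qed

lemma alt_sum:
  assumes "n = 2 * m" "(\<Sum>i<m. \<beta> (2 * i)) = pi"
  shows "(\<Sum>i<m. B (2 * i + s)) = pi"
proof -
  have O: "(\<Sum>i<m. \<beta> (2 * i + 1)) = pi" using even_split[OF assms(1)] assms(2) by simp
  have P0: "(\<Sum>i<m. B (2 * i + 0)) = pi"
  proof -
    have "(\<Sum>i<m. B (2 * i + 0)) = (\<Sum>i<m. \<beta> (2 * i))"
      unfolding B_def using assms(1) by (intro sum.cong) simp_all
    thus ?thesis using assms(2) by simp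
  qed
  have P1: "(\<Sum>i<m. B (2 * i + 1)) = pi"
  proof -
    have "(\<Sum>i<m. B (2 * i + 1)) = (\<Sum>i<m. \<beta> (2 * i + 1))"
      unfolding B_def using assms(1) by (intro sum.cong) simp_all
    thus ?thesis using O by simp
  qed
  have step: "(\<Sum>i<m. B (2 * i + Suc (Suc s))) = (\<Sum>i<m. B (2 * i + s))" for s
  proof -
    define g where "g i = B (2 * i + s)" for i
    have "(\<Sum>i<Suc m. g i) = g 0 + (\<Sum>i<m. g (Suc i))" by (rule sum.lessThan_Suc_shift)
    moreover have "(\<Sum>i<Suc m. g i) = (\<Sum>i<m. g i) + g m" by simp
    moreover have "g m = g 0" unfolding g_def using assms(1) B_add_n[of s] by (simp add: add.commute)
    moreover have "(\<Sum>i<m. g (Suc i)) = (\<Sum>i<m. B (2 * i + Suc (Suc s)))" unfolding g_def by simp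
    ultimately show ?thesis unfolding g_def by simp
  qed
  have "(\<Sum>i<m. B (2 * i + s)) = pi \<and> (\<Sum>i<m. B (2 * i + Suc s)) = pi"
  proof (induction s)
    case 0 then show ?case using P0 P1 by simp
  next
    case (Suc s) then show ?case using step[of s] by simp
  qed
  thus ?thesis by simp
qed

lemma ident:
  assumes "n = 2 * m" "(\<Sum>i<m. \<beta> (2 * i)) = pi" and rec: "\<And>l. A l + A (Suc l) = 2 * B l"
    and "h < m"
  shows "(\<Sum>i=1..h. B (2 * i + j)) + (\<Sum>i=h+1..m-1. B (2 * i + 1 + j)) + (A (j + 1) + A (j + 2 * h + 2)) / 2 = pi"
  using assms(4)
proof (induction h)
  case 0
  define g where "g i = B (2 * i + (j + 1))" for i
  have m1: "m = Suc (m - 1)" using 0 by simp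
  have "(\<Sum>i<m. g i) = (\<Sum>i=0..<m. g i)" by (simp add: atLeast0LessThan)
  also have "\<dots> = g 0 + (\<Sum>i=Suc 0..<m. g i)" using 0 by (simp add: sum.atLeast_Suc_lessThan)
  also have "(\<Sum>i=Suc 0..<m. g i) = (\<Sum>i=1..m-1. g i)" by (subst m1) (simp add: atLeastLessThanSuc_atLeastAtMost)
  finally have "(\<Sum>i<m. g i) = g 0 + (\<Sum>i=1..m-1. g i)" .
  moreover have "(\<Sum>i<m. g i) = pi" unfolding g_def by (rule alt_sum[OF assms(1,2)])
  moreover have "(\<Sum>i=1..m-1. g i) = (\<Sum>i=0+1..m-1. B (2 * i + 1 + j))" unfolding g_def
    by (intro sum.cong) (simp_all add: algebra_simps)
  moreover have "A (j + 1) + A (j + 2 * 0 + 2) = 2 * g 0" using rec[of "j + 1"] unfolding g_def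
    by (simp add: algebra_simps)
  ultimately show ?case by simp
next
  case (Suc h)
  have IH: "(\<Sum>i=1..h. B (2 * i + j)) + (\<Sum>i=h+1..m-1. B (2 * i + 1 + j)) + (A (j + 1) + A (j + 2 * h + 2)) / 2 = pi"
    using Suc by simp
  have s1: "(\<Sum>i=1..Suc h. B (2 * i + j)) = (\<Sum>i=1..h. B (2 * i + j)) + B (j + 2 * h + 2)"
    by (simp add: algebra_simps)
  have s2': "(\<Sum>i=h+1..m-1. B (2 * i + 1 + j)) = B (2 * (h + 1) + 1 + j) + (\<Sum>i=Suc h+1..m-1. B (2 * i + 1 + j))"
    using Suc.prems by (subst sum.atLeast_Suc_atMost) simp_all
  have "B (2 * (h + 1) + 1 + j) = B (j + 2 * h + 3)" by (rule arg_cong[where f=B]) simp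
  hence s2: "(\<Sum>i=h+1..m-1. B (2 * i + 1 + j)) = B (j + 2 * h + 3) + (\<Sum>i=Suc h+1..m-1. B (2 * i + 1 + j))"
    using s2' by simp
  have e1: "Suc (j + 2 * h + 2) = j + 2 * h + 3" by simp
  have e2: "Suc (j + 2 * h + 3) = j + 2 * Suc h + 2" by simp
  have r1: "A (j + 2 * h + 2) + A (j + 2 * h + 3) = 2 * B (j + 2 * h + 2)"
    using rec[of "j + 2 * h + 2"] unfolding e1 .
  have r2: "A (j + 2 * h + 3) + A (j + 2 * Suc h + 2) = 2 * B (j + 2 * h + 3)"
    using rec[of "j + 2 * h + 3"] unfolding e2 .
  have "(\<Sum>i = 1..Suc h. B (2 * i + j)) + (\<Sum>i = Suc h + 1..m - 1. B (2 * i + 1 + j)) + (A (j + 1) + A (j + 2 * Suc h + 2)) / 2 = pi"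
  proof -
    have a4: "A (j + 2 * Suc h + 2) = 2 * B (j + 2 * h + 3) - 2 * B (j + 2 * h + 2) + A (j + 2 * h + 2)"
      using r1 r2 by linarith
    define S1 where "S1 = (\<Sum>i = 1..h. B (2 * i + j))"
    define S2 where "S2 = (\<Sum>i = Suc h + 1..m - 1. B (2 * i + 1 + j))"
    have i2: "S1 + (B (j + 2 * h + 3) + S2) + (A (j + 1) + A (j + 2 * h + 2)) / 2 = pi"
      using IH unfolding s2 S1_def S2_def .
    show ?thesis unfolding s1 a4 S1_def[symmetric] S2_def[symmetric] using i2 by (simp add: field_simps)
  qed
  thus ?case by simp
qed

lemma even_char:
  assumes nm: "n = 2 * m" and virt: "virtually_inscribable n \<alpha> \<beta>"
  shows "(\<exists>a. (\<forall>k<n. 0 < a k) \<and> (\<forall>k<n. a k + a (Suc k mod n) = 2 * \<beta> k))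
     \<longleftrightarrow> (\<forall>h<m. \<forall>j<n. (\<Sum>i=1..h. \<beta> ((2 * i + j) mod n))
                             + (\<Sum>i=h+1..m-1. \<beta> ((2 * i + 1 + j) mod n)) < pi)"
proof -
  have E: "(\<Sum>i<m. \<beta> (2 * i)) = pi" by (rule virt_even[OF nm virt])
  have Sform: "(\<Sum>i=1..h. \<beta> ((2 * i + j) mod n)) + (\<Sum>i=h+1..m-1. \<beta> ((2 * i + 1 + j) mod n))
     = (\<Sum>i=1..h. B (2 * i + j)) + (\<Sum>i=h+1..m-1. B (2 * i + 1 + j))" for h j
    unfolding B_def ..
  have key: "h < m \<Longrightarrow> (\<forall>k<n. a k + a (Suc k mod n) = 2 * \<beta> k) \<Longrightarrow>
     (\<Sum>i=1..h. \<beta> ((2 * i + j) mod n)) + (\<Sum>i=h+1..m-1. \<beta> ((2 * i + 1 + j) mod n))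
       + (a ((j + 1) mod n) + a ((j + 2 * h + 2) mod n)) / 2 = pi" for a h j
    unfolding Sform using ident[OF nm E, where A="\<lambda>l. a (l mod n)"] rec_ext by blast
  show ?thesis
  proof
    assume "\<exists>a. (\<forall>k<n. 0 < a k) \<and> (\<forall>k<n. a k + a (Suc k mod n) = 2 * \<beta> k)"
    then obtain a where apos: "\<forall>k<n. 0 < a k" and arec: "\<forall>k<n. a k + a (Suc k mod n) = 2 * \<beta> k" by blast
    show "\<forall>h<m. \<forall>j<n. (\<Sum>i=1..h. \<beta> ((2 * i + j) mod n))
                             + (\<Sum>i=h+1..m-1. \<beta> ((2 * i + 1 + j) mod n)) < pi"
    proof (intro allI impI)
      fix h j assume h: "h < m" and j: "j < n"
      have "0 < a ((j + 1) mod n)" "0 < a ((j + 2 * h + 2) mod n)" using apos npos by simp_all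
      thus "(\<Sum>i=1..h. \<beta> ((2 * i + j) mod n)) + (\<Sum>i=h+1..m-1. \<beta> ((2 * i + 1 + j) mod n)) < pi"
        by (rule half_lt[OF key[OF h arec, of j]])
    qed
  next
    assume C: "\<forall>h<m. \<forall>j<n. (\<Sum>i=1..h. \<beta> ((2 * i + j) mod n))
                             + (\<Sum>i=h+1..m-1. \<beta> ((2 * i + 1 + j) mod n)) < pi"
    define c where "c = altc \<beta>"
    have O: "(\<Sum>i<m. \<beta> (2 * i + 1)) = pi" using even_split[OF nm] E by simp
    have cn: "c n = 0" unfolding c_def nm altc_even using E O by (simp add: sum_subtractf)
    define aa where "aa t k = c k + (-1)^k * t" for t k
    have atrec: "\<forall>k<n. aa t k + aa t (Suc k mod n) = 2 * \<beta> k" for t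
    proof (intro allI impI)
      fix k assume k: "k < n"
      show "aa t k + aa t (Suc k mod n) = 2 * \<beta> k"
      proof (cases "Suc k < n")
        case True then show ?thesis unfolding aa_def c_def by simp
      next
        case False
        hence kn: "Suc k = n" using k by simp
        hence "odd k" using nm by presburger
        moreover have "c (Suc k) = 0" using kn cn by simp
        hence "c k = 2 * \<beta> k" unfolding c_def by simp
        moreover have "Suc k mod n = 0" using kn by simp
        ultimately show ?thesis unfolding aa_def by (simp add: c_def)
      qed
    qed
    have pair: "p < q \<Longrightarrow> q < n \<Longrightarrow> odd (q - p) \<Longrightarrow> 0 < c p + c q" for p q
    proof -
      assume pq: "p < q" "q < n" "odd (q - p)"
      define h where "h = (q - p - 1) div 2"
      define j where "j = (p + n - 1) mod n"
      have qp: "q - p = 2 * h + 1" unfolding h_def using pq by presburger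
      have hm: "h < m" using qp pq nm by linarith
      have jn: "j < n" unfolding j_def using npos by simp
      have j1: "(j + 1) mod n = p"
      proof -
        have "(j + 1) mod n = (p + n - 1 + 1) mod n" unfolding j_def by (simp add: mod_Suc_eq)
        also have "p + n - 1 + 1 = p + n" using npos by simp
        finally show ?thesis using pq by simp
      qed
      have j2: "(j + 2 * h + 2) mod n = q"
      proof -
        have "(j + 2 * h + 2) mod n = (j + (2 * h + 2)) mod n" by (simp add: add.assoc)
        also have "\<dots> = (p + n - 1 + (2 * h + 2)) mod n" unfolding j_def by (rule mod_add_left_eq)
        also have "p + n - 1 + (2 * h + 2) = q + n" using npos qp pq by simp
        finally show ?thesis using pq by simp
      qed
      have "(\<Sum>i=1..h. \<beta> ((2 * i + j) mod n)) + (\<Sum>i=h+1..m-1. \<beta> ((2 * i + 1 + j) mod n))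
        + (aa 0 ((j + 1) mod n) + aa 0 ((j + 2 * h + 2) mod n)) / 2 = pi"
        by (rule key[OF hm atrec])
      moreover have "(\<Sum>i=1..h. \<beta> ((2 * i + j) mod n)) + (\<Sum>i=h+1..m-1. \<beta> ((2 * i + 1 + j) mod n)) < pi"
        using C hm jn by blast
      ultimately have "0 < aa 0 ((j + 1) mod n) + aa 0 ((j + 2 * h + 2) mod n)" by (rule half_gt)
      thus ?thesis unfolding j1 j2 aa_def by simp
    qed
    have eo: "e < n \<Longrightarrow> od < n \<Longrightarrow> even e \<Longrightarrow> odd od \<Longrightarrow> - c e < c od" for e od
    proof -
      assume eo: "e < n" "od < n" "even e" "odd od"
      have "e \<noteq> od" using eo by auto
      hence "e < od \<or> od < e" by auto
      thus "- c e < c od"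
      proof
        assume "e < od" thus ?thesis using pair[of e od] eo by simp
      next
        assume "od < e" thus ?thesis using pair[of od e] eo by simp
      qed
    qed
    define Ev where "Ev = (\<lambda>e. - c e) ` {e. e < n \<and> even e}"
    define Od where "Od = c ` {od. od < n \<and> odd od}"
    have fE: "finite Ev" "Ev \<noteq> {}" unfolding Ev_def using npos by auto
    have fO: "finite Od" "Od \<noteq> {}" unfolding Od_def using n3 by (auto intro!: exI[of _ 1])
    define L where "L = Max Ev"
    define U where "U = Min Od"
    have LU: "L < U"
    proof -
      have "L \<in> Ev" unfolding L_def using fE by (rule Max_in)
      moreover have "U \<in> Od" unfolding U_def using fO by (rule Min_in)
      ultimately show ?thesis using eo unfolding Ev_def Od_def by auto
    qed
    define t where "t = (L + U) / 2"
    have Lt: "L < t" "t < U" unfolding t_def using LU by (auto simp: field_simps)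
    have "\<forall>k<n. 0 < aa t k"
    proof (intro allI impI)
      fix k assume k: "k < n"
      show "0 < aa t k"
      proof (cases "even k")
        case True
        have "- c k \<in> Ev" unfolding Ev_def using k True by auto
        hence "- c k \<le> L" unfolding L_def using fE by simp
        thus ?thesis unfolding aa_def using True Lt by simp
      next
        case False
        have "c k \<in> Od" unfolding Od_def using k False by auto
        hence "U \<le> c k" unfolding U_def using fO by simp
        thus ?thesis unfolding aa_def using False Lt by simp
      qed
    qed
    thus "\<exists>a. (\<forall>k<n. 0 < a k) \<and> (\<forall>k<n. a k + a (Suc k mod n) = 2 * \<beta> k)"
      using atrec by blast
  qed
qed

end

theorem theorem3p5:
  fixes n :: nat and \<alpha> :: real and \<beta> :: "nat \<Rightarrow> real"
  assumes "n \<ge> 3"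
    and "\<forall>i<n. 0 < \<beta> i \<and> \<beta> i < pi"
    and "(\<Sum>i<n. \<beta> i) = 2 * pi"
    and "virtually_inscribable n \<alpha> \<beta>"
  shows "(odd n \<longrightarrow>
            (inscribable n \<alpha> \<beta> \<longleftrightarrow>
               (\<forall>j<n. (\<Sum>k<n. (-1) ^ k * \<beta> ((j + k) mod n)) > 0)))
       \<and> (\<forall>m. n = 2 * m \<longrightarrow>
            (inscribable n \<alpha> \<beta> \<longleftrightarrow>
               (\<forall>h<m. \<forall>j<n. (\<Sum>i=1..h. \<beta> ((2 * i + j) mod n))
                             + (\<Sum>i=h+1..m-1. \<beta> ((2 * i + 1 + j) mod n)) < pi)))"
proof -
  interpret F: fanctx n \<alpha> \<beta> by unfold_locales (use assms in auto)
  show ?thesis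
  proof (intro conjI impI allI)
    assume o: "odd n"
    show "inscribable n \<alpha> \<beta> \<longleftrightarrow> (\<forall>j<n. (\<Sum>k<n. (-1) ^ k * \<beta> ((j + k) mod n)) > 0)"
      using F.geo_iff F.odd_char[OF o] by simp
  next
    fix m assume nm: "n = 2 * m"
    show "inscribable n \<alpha> \<beta> \<longleftrightarrow>
               (\<forall>h<m. \<forall>j<n. (\<Sum>i=1..h. \<beta> ((2 * i + j) mod n))
                             + (\<Sum>i=h+1..m-1. \<beta> ((2 * i + 1 + j) mod n)) < pi)"
      using F.geo_iff F.even_char[OF nm assms(4)] by simp
  qed
qed

end
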